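(* Under the standing assumptions below, let $t>0$ with $F(t)>0$ and let $g:\mathbb R_+\to\mathbb R$ be Borel with $\mathbb E|g(\tau)|<\infty$. Then $\mathbb P$-a.s. $$\mathbb E[g(\tau)\mid\zeta_t]=\frac{1}{F(t)}\int_{(0,t]}g(r)\,\mathbb P_\tau(dr)\;\mathbb I_{\{\zeta_t=1\}}+\int_{(t,+\infty)}g(r)\,\phi_t^r(\zeta_t)\,\mathbb P_\tau(dr)\;\mathbb I_{\{0<\zeta_t<1\}},$$ where for $r>t$ and $x\in\mathbb R$, $$\phi_t^r(x)=\frac{(1-x)^r\,\frac{\Gamma(r)}{\Gamma(r-t)}}{\int_{(t,+\infty)}(1-x)^s\,\frac{\Gamma(s)}{\Gamma(s-t)}\,\mathbb P_\tau(ds)}\,\mathbb I_{(0,1)}(x).$$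
   Context: $(\Omega,\mathcal F,\mathbb P)$ complete; $\gamma$ a standard gamma process (driftless subordinator, $\gamma_0=0$, càdlàg, $\mathbb E[e^{-\lambda\gamma_t}]=(1+\lambda)^{-t}$); $\tau$ a strictly positive random variable independent of $\gamma$, with distribution function $F$ and law $\mathbb P_\tau$; $\zeta_t=\gamma_{t\wedge\tau}/\gamma_\tau$, $t\ge0$. Equivalently, $\phi_t^r(x)=\varphi^r_t(x)/\int_{(t,\infty)}\varphi^s_t(x)\mathbb P_\tau(ds)$ where $\varphi^r_t(x)=\frac{\Gamma(r)}{\Gamma(t)\Gamma(r-t)}x^{t-1}(1-x)^{r-t-1}\mathbb I_{(0,1)}(x)$ is the Beta$(t,r-t)$ density of $\gamma_t/\gamma_r$. *)

theory Defs
  imports "HOL-Probability.Probability"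
begin

definition gamma_density :: "real \<Rightarrow> real \<Rightarrow> real" where
  "gamma_density a x = (if 0 < x then x powr (a - 1) * exp (- x) / Gamma a else 0)"

definition gamma_process :: "'a measure \<Rightarrow> (real \<Rightarrow> 'a \<Rightarrow> real) \<Rightarrow> bool" where
  "gamma_process M \<gamma> \<longleftrightarrow>
     prob_space M \<and>
     (\<forall>t\<ge>0. \<gamma> t \<in> borel_measurable M) \<and>
     (\<forall>\<omega>\<in>space M. \<gamma> 0 \<omega> = 0) \<and>
     (\<forall>\<omega>\<in>space M. mono_on {0..} (\<lambda>t. \<gamma> t \<omega>)) \<and>
     (\<forall>\<omega>\<in>space M. \<forall>t\<ge>0. continuous (at_right t) (\<lambda>s. \<gamma> s \<omega>)) \<and>
     (\<forall>\<omega>\<in>space M. \<forall>t>0. \<exists>l. ((\<lambda>s. \<gamma> s \<omega>) \<longlongrightarrow> l) (at_left t)) \<and>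
     (\<forall>s t. 0 \<le> s \<and> s < t \<longrightarrow>
        distributed M lborel (\<lambda>\<omega>. \<gamma> t \<omega> - \<gamma> s \<omega>) (\<lambda>x. ennreal (gamma_density (t - s) x))) \<and>
     (\<forall>(n::nat) (ts::nat \<Rightarrow> real). 0 \<le> ts 0 \<and> (\<forall>i<n. ts i < ts (Suc i)) \<longrightarrow>
        prob_space.indep_vars M (\<lambda>_. borel) (\<lambda>i \<omega>. \<gamma> (ts (Suc i)) \<omega> - \<gamma> (ts i) \<omega>) {..<n})"

definition zeta :: "(real \<Rightarrow> 'a \<Rightarrow> real) \<Rightarrow> ('a \<Rightarrow> real) \<Rightarrow> real \<Rightarrow> 'a \<Rightarrow> real" where
  "zeta \<gamma> \<tau> t \<omega> = \<gamma> (min t (\<tau> \<omega>)) \<omega> / \<gamma> (\<tau> \<omega>) \<omega>"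

definition phi :: "real measure \<Rightarrow> real \<Rightarrow> real \<Rightarrow> real \<Rightarrow> real" where
  "phi P t r x =
     ((1 - x) powr r * (Gamma r / Gamma (r - t)) /
      (\<integral>s\<in>{t<..}. (1 - x) powr s * (Gamma s / Gamma (s - t)) \<partial>P)) * indicator {0<..<1} x"

end

theory Submission
  imports Defs
begin

lemma gamma_density_nonneg: "0 < a \<Longrightarrow> 0 \<le> gamma_density a x"
  unfolding gamma_density_def by (auto intro!: divide_nonneg_pos)

lemma borel_measurable_Gamma_real[measurable]: "(Gamma :: real \<Rightarrow> real) \<in> borel_measurable borel"
proof -
  have "(\<lambda>x::real. inverse (rGamma x)) \<in> borel_measurable borel"
    by (intro borel_measurable_inverse borel_measurable_continuous_onI continuous_on_rGamma)
  moreover have "(\<lambda>x::real. inverse (rGamma x)) = Gamma" by (simp add: rGamma_inverse_Gamma)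
  ultimately show ?thesis by simp
qed

lemma borel_measurable_Gamma_real'[measurable (raw)]:
  assumes [measurable]: "f \<in> borel_measurable N" shows "(\<lambda>x. Gamma (f x :: real)) \<in> borel_measurable N"
  using measurable_compose[OF assms borel_measurable_Gamma_real] by (simp add: o_def)

lemma gamma_density_measurable'[measurable (raw)]:
  assumes [measurable]: "f \<in> borel_measurable N" "g \<in> borel_measurable N"
  shows "(\<lambda>x. gamma_density (f x) (g x)) \<in> borel_measurable N"
  unfolding gamma_density_def by measurable

lemma gamma_density_measurable[measurable]: "(\<lambda>x. gamma_density a x) \<in> borel_measurable borel"
  unfolding gamma_density_def by measurable

locale gsetup = prob_space M for M :: "'a measure" +
  fixes \<gamma> :: "real \<Rightarrow> 'a \<Rightarrow> real" and \<tau> :: "'a \<Rightarrow> real" and t :: real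
  assumes gp: "gamma_process M \<gamma>"
    and tau_meas[measurable]: "\<tau> \<in> borel_measurable M"
    and tau_pos: "\<forall>\<omega>\<in>space M. 0 < \<tau> \<omega>"
    and indep: "indep_set
                  (sigma_sets (space M) {\<tau> -` A \<inter> space M | A. A \<in> sets borel})
                  (sigma_sets (space M) (\<Union>s\<in>{0..}. {\<gamma> s -` A \<inter> space M | A. A \<in> sets borel}))"
    and t_pos: "0 < t"
begin

lemma gmeas: "0 \<le> s \<Longrightarrow> \<gamma> s \<in> borel_measurable M"
  using gp unfolding gamma_process_def by auto

lemma g0: "\<omega> \<in> space M \<Longrightarrow> \<gamma> 0 \<omega> = 0"
  using gp unfolding gamma_process_def by auto

lemma gright: "\<omega> \<in> space M \<Longrightarrow> 0 \<le> s \<Longrightarrow> continuous (at_right s) (\<lambda>u. \<gamma> u \<omega>)"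
  using gp unfolding gamma_process_def by auto

lemma gdist: "0 \<le> s \<Longrightarrow> s < u \<Longrightarrow>
   distributed M lborel (\<lambda>\<omega>. \<gamma> u \<omega> - \<gamma> s \<omega>) (\<lambda>x. ennreal (gamma_density (u - s) x))"
  using gp unfolding gamma_process_def by auto

lemma gind: "0 \<le> ts 0 \<Longrightarrow> (\<forall>i<n. ts i < ts (Suc i)) \<Longrightarrow>
   indep_vars (\<lambda>_. borel) (\<lambda>i \<omega>. \<gamma> (ts (Suc i)) \<omega> - \<gamma> (ts i) \<omega>) {..<n}"
  using gp unfolding gamma_process_def by auto

lemma gamma_nn_one:
  assumes "0 < a" shows "(\<integral>\<^sup>+x. ennreal (gamma_density a x) \<partial>lborel) = 1"
proof -
  have d: "distributed M lborel (\<lambda>\<omega>. \<gamma> a \<omega> - \<gamma> 0 \<omega>) (\<lambda>x. ennreal (gamma_density a x))"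
    using gdist[of 0 a] assms by simp
  then have X: "(\<lambda>\<omega>. \<gamma> a \<omega> - \<gamma> 0 \<omega>) \<in> measurable M lborel" by (simp add: distributed_def)
  interpret P: prob_space "distr M lborel (\<lambda>\<omega>. \<gamma> a \<omega> - \<gamma> 0 \<omega>)"
    by (rule prob_space_distr[OF X])
  have "1 = emeasure (distr M lborel (\<lambda>\<omega>. \<gamma> a \<omega> - \<gamma> 0 \<omega>)) UNIV"
    using P.emeasure_space_1 by simp
  also have "\<dots> = emeasure (density lborel (\<lambda>x. ennreal (gamma_density a x))) UNIV"
    using d by (simp add: distributed_def)
  also have "\<dots> = (\<integral>\<^sup>+x. ennreal (gamma_density a x) \<partial>lborel)"
    by (subst emeasure_density) auto
  finally show ?thesis by simp
qed

lemma gamma_int: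
  assumes a: "0 < a"
  shows "(\<integral>\<^sup>+x. ennreal (x powr (a-1) * exp(-x)) * indicator {0<..} x \<partial>lborel) = ennreal (Gamma a)"
proof -
  have G: "0 < Gamma a" using a by (simp add: Gamma_real_pos)
  have "1 = (\<integral>\<^sup>+x. ennreal (gamma_density a x) \<partial>lborel)" using gamma_nn_one[OF a] by simp
  also have "\<dots> = (\<integral>\<^sup>+x. ennreal (1 / Gamma a) * (ennreal (x powr (a-1) * exp(-x)) * indicator {0<..} x) \<partial>lborel)"
    using G by (intro nn_integral_cong) (auto simp: gamma_density_def indicator_def ennreal_mult'[symmetric])
  also have "\<dots> = ennreal (1 / Gamma a) * (\<integral>\<^sup>+x. ennreal (x powr (a-1) * exp(-x)) * indicator {0<..} x \<partial>lborel)"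
    by (subst nn_integral_cmult) auto
  finally have "ennreal (Gamma a) * 1 = ennreal (Gamma a) * ennreal (1 / Gamma a) * (\<integral>\<^sup>+x. ennreal (x powr (a-1) * exp(-x)) * indicator {0<..} x \<partial>lborel)"
    by (simp add: mult.assoc)
  also have "ennreal (Gamma a) * ennreal (1 / Gamma a) = 1"
    using G by (simp add: ennreal_mult'[symmetric])
  finally show ?thesis by simp
qed

lemma gpos:
  assumes r: "0 < r" shows "AE \<omega> in M. 0 < \<gamma> r \<omega>"
proof -
  have d: "distributed M lborel (\<lambda>\<omega>. \<gamma> r \<omega> - \<gamma> 0 \<omega>) (\<lambda>x. ennreal (gamma_density r x))"
    using gdist[of 0 r] r by simp
  then have X: "(\<lambda>\<omega>. \<gamma> r \<omega> - \<gamma> 0 \<omega>) \<in> measurable M lborel" by (simp add: distributed_def)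
  have "AE x in density lborel (\<lambda>x. ennreal (gamma_density r x)). 0 < x"
    by (subst AE_density) (auto simp: gamma_density_def)
  moreover have eq: "distr M lborel (\<lambda>\<omega>. \<gamma> r \<omega> - \<gamma> 0 \<omega>) = density lborel (\<lambda>x. ennreal (gamma_density r x))"
    using d by (simp add: distributed_def)
  ultimately have "AE x in distr M lborel (\<lambda>\<omega>. \<gamma> r \<omega> - \<gamma> 0 \<omega>). 0 < x"
    by (simp only:)
  then have "AE \<omega> in M. 0 < \<gamma> r \<omega> - \<gamma> 0 \<omega>"
    by (rule AE_distrD[OF X])
  then show ?thesis using g0 by (auto elim!: AE_mp intro!: AE_I2)
qed

end

context gsetup begin

lemma exp_int:
  assumes r: "0 < r" and c: "0 < c"
  shows "(\<integral>\<^sup>+w. ennreal (w powr (r-1) * exp (-(c*w))) * indicator {0<..} w \<partial>lborel)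
         = ennreal (c powr (-r) * Gamma r)"
proof -
  let ?F = "\<lambda>w. ennreal (w powr (r-1) * exp (-(c*w))) * indicator {0<..} w"
  have "(\<integral>\<^sup>+w. ?F w \<partial>lborel) = \<bar>1/c\<bar> * (\<integral>\<^sup>+y. ?F (0 + (1/c) * y) \<partial>lborel)"
    by (rule nn_integral_real_affine) (use c in auto)
  also have "(\<integral>\<^sup>+y. ?F (0 + (1/c) * y) \<partial>lborel) =
      (\<integral>\<^sup>+y. ennreal (c powr (1-r)) * (ennreal (y powr (r-1) * exp(-y)) * indicator {0<..} y) \<partial>lborel)"
  proof (intro nn_integral_cong)
    fix y :: real
    show "?F (0 + (1/c) * y) = ennreal (c powr (1-r)) * (ennreal (y powr (r-1) * exp(-y)) * indicator {0<..} y)"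
    proof (cases "0 < y")
      case True
      have "((1/c) * y) powr (r-1) = c powr (1-r) * y powr (r-1)"
        using c True by (simp add: powr_mult powr_divide powr_minus_divide divide_simps powr_diff)
      moreover have "c * ((1/c) * y) = y" using c by simp
      ultimately show ?thesis using True c
        by (simp add: ennreal_mult'[symmetric] mult.assoc zero_less_mult_iff)
    next
      case False
      then show ?thesis using c by (simp add: indicator_def zero_less_mult_iff zero_less_divide_iff)
    qed
  qed
  also have "\<dots> = ennreal (c powr (1-r)) * ennreal (Gamma r)"
    by (subst nn_integral_cmult) (auto simp: gamma_int[OF r])
  finally have "(\<integral>\<^sup>+w. ?F w \<partial>lborel) = ennreal (1/c) * (ennreal (c powr (1-r)) * ennreal (Gamma r))"
    using c by simp
  also have "\<dots> = ennreal (1/c * c powr (1-r) * Gamma r)"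
    using c r by (simp add: ennreal_mult'[symmetric] mult.assoc Gamma_real_pos less_imp_le)
  also have "1/c * c powr (1-r) = c powr (-r)"
    using c by (simp add: powr_diff powr_minus divide_simps)
  finally show ?thesis .
qed

definition kern :: "real \<Rightarrow> real \<Rightarrow> real" where
  "kern r v = (if 0 < v then v powr (t-1) * (1+v) powr (-r) * Gamma r / (Gamma t * Gamma (r-t)) else 0)"

lemma kern_nonneg: "t < r \<Longrightarrow> 0 \<le> kern r v"
  using t_pos unfolding kern_def by (auto intro!: divide_nonneg_pos mult_pos_pos Gamma_real_pos less_imp_le)

lemma kern_measurable[measurable (raw)]:
  assumes [measurable]: "f \<in> borel_measurable N" "g \<in> borel_measurable N"
  shows "(\<lambda>x. kern (f x) (g x)) \<in> borel_measurable N"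
  unfolding kern_def by measurable

lemma w_int:
  assumes r: "t < r"
  shows "(\<integral>\<^sup>+w. ennreal (gamma_density (r-t) w * w * gamma_density t (w * v)) \<partial>lborel) = ennreal (kern r v)"
proof (cases "0 < v")
  case False
  have "(\<integral>\<^sup>+w. ennreal (gamma_density (r-t) w * w * gamma_density t (w * v)) \<partial>lborel) = (\<integral>\<^sup>+(w::real). 0 \<partial>lborel)"
  proof (intro nn_integral_cong)
    fix w :: real
    show "ennreal (gamma_density (r-t) w * w * gamma_density t (w * v)) = 0"
    proof (cases "0 < w")
      case True
      then have "\<not> 0 < w * v" using False by (simp add: zero_less_mult_iff)
      then show ?thesis by (simp add: gamma_density_def)
    qed (simp add: gamma_density_def)
  qed
  then show ?thesis using False by (simp add: kern_def)
next
  case v: True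
  define C where "C = v powr (t-1) / (Gamma t * Gamma (r-t))"
  have Gt: "0 < Gamma t" "0 < Gamma (r-t)" using t_pos r by (auto intro: Gamma_real_pos)
  have C: "0 \<le> C" unfolding C_def using Gt by auto
  have "(\<integral>\<^sup>+w. ennreal (gamma_density (r-t) w * w * gamma_density t (w * v)) \<partial>lborel)
      = (\<integral>\<^sup>+w. ennreal C * (ennreal (w powr (r-1) * exp (-((1+v)*w))) * indicator {0<..} w) \<partial>lborel)"
  proof (intro nn_integral_cong)
    fix w :: real
    show "ennreal (gamma_density (r-t) w * w * gamma_density t (w * v)) =
        ennreal C * (ennreal (w powr (r-1) * exp (-((1+v)*w))) * indicator {0<..} w)"
    proof (cases "0 < w")
      case w: True
      have "gamma_density (r-t) w * w * gamma_density t (w * v) =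
          C * (w powr (r-1) * exp (-((1+v)*w)))"
      proof -
        have "gamma_density (r-t) w * w * gamma_density t (w * v) =
           (w powr (r-t-1) * w powr 1 * w powr (t-1)) * v powr (t-1) * (exp (-w) * exp (-(w * v))) / (Gamma (r-t) * Gamma t)"
          using w v by (simp add: gamma_density_def powr_mult field_simps)
        also have "w powr (r-t-1) * w powr 1 * w powr (t-1) = w powr (r-1)"
          by (simp only: powr_add[symmetric]) simp
        also have "exp (-w) * exp (-(w * v)) = exp (-((1+v)*w))"
          by (simp add: exp_add[symmetric] algebra_simps)
        finally show ?thesis unfolding C_def by (simp add: field_simps)
      qed
      then show ?thesis using w C by (simp add: ennreal_mult'[symmetric])
    next
      case False
      then show ?thesis by (simp add: gamma_density_def)
    qed
  qed
  also have "\<dots> = ennreal C * ennreal ((1+v) powr (-r) * Gamma r)"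
    using r t_pos v by (subst nn_integral_cmult) (auto simp: exp_int)
  also have "\<dots> = ennreal (kern r v)"
    using v C r t_pos by (simp add: kern_def C_def ennreal_mult'[symmetric] Gamma_real_pos less_imp_le field_simps)
  finally show ?thesis .
qed

lemma x_subst:
  assumes r: "t < r" and h[measurable]: "h \<in> borel_measurable borel"
  shows "ennreal (gamma_density (r-t) w) * (\<integral>\<^sup>+x. ennreal (gamma_density t x) * h (x/(x+w)) \<partial>lborel)
       = (\<integral>\<^sup>+v. ennreal (gamma_density (r-t) w * w * gamma_density t (w * v)) * h (v/(1+v)) \<partial>lborel)"
proof (cases "0 < w")
  case False
  then show ?thesis by (simp add: gamma_density_def)
next
  case w: True
  have "(\<integral>\<^sup>+x. ennreal (gamma_density t x) * h (x/(x+w)) \<partial>lborel)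
      = \<bar>w\<bar> * (\<integral>\<^sup>+v. ennreal (gamma_density t (0 + w * v)) * h ((0 + w * v)/((0 + w * v)+w)) \<partial>lborel)"
    by (rule nn_integral_real_affine) (use w in auto)
  also have "(\<integral>\<^sup>+v. ennreal (gamma_density t (0 + w * v)) * h ((0 + w * v)/((0 + w * v)+w)) \<partial>lborel)
     = (\<integral>\<^sup>+v. ennreal (gamma_density t (w * v)) * h (v/(1+v)) \<partial>lborel)"
  proof (intro nn_integral_cong)
    fix v :: real
    show "ennreal (gamma_density t (0 + w * v)) * h ((0 + w * v)/((0 + w * v)+w)) = ennreal (gamma_density t (w * v)) * h (v/(1+v))"
    proof (cases "0 < v")
      case True
      have "w * v + w = w * (1+v)" by (simp add: algebra_simps)
      then have "(w * v)/(w * v+w) = v/(1+v)" using w True by simp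
      then show ?thesis by simp
    next
      case False
      then have "\<not> 0 < w * v" using w by (simp add: zero_less_mult_iff)
      then show ?thesis by (simp add: gamma_density_def)
    qed
  qed
  finally have "ennreal (gamma_density (r-t) w) * (\<integral>\<^sup>+x. ennreal (gamma_density t x) * h (x/(x+w)) \<partial>lborel)
     = ennreal (gamma_density (r-t) w * w) * (\<integral>\<^sup>+v. ennreal (gamma_density t (w * v)) * h (v/(1+v)) \<partial>lborel)"
    using w r by (simp add: ennreal_mult[OF gamma_density_nonneg] mult.assoc)
  also have "\<dots> = (\<integral>\<^sup>+v. ennreal (gamma_density (r-t) w * w) * (ennreal (gamma_density t (w * v)) * h (v/(1+v))) \<partial>lborel)"
    by (subst nn_integral_cmult) auto
  also have "\<dots> = (\<integral>\<^sup>+v. ennreal (gamma_density (r-t) w * w * gamma_density t (w * v)) * h (v/(1+v)) \<partial>lborel)"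
  proof (intro nn_integral_cong)
    fix v :: real
    have a: "0 \<le> gamma_density (r-t) w * w" using w r by (simp add: gamma_density_nonneg)
    have b: "0 \<le> gamma_density t (w * v)" using t_pos by (simp add: gamma_density_nonneg)
    show "ennreal (gamma_density (r-t) w * w) * (ennreal (gamma_density t (w * v)) * h (v/(1+v))) =
      ennreal (gamma_density (r-t) w * w * gamma_density t (w * v)) * h (v/(1+v))"
      unfolding ennreal_mult[OF a b] by (simp only: mult.assoc)
  qed
  finally show ?thesis .
qed

end

context gsetup begin

lemma indep_XW:
  assumes r: "t < r"
  shows "indep_var lborel (\<lambda>\<omega>. \<gamma> t \<omega> - \<gamma> 0 \<omega>) lborel (\<lambda>\<omega>. \<gamma> r \<omega> - \<gamma> t \<omega>)"
proof -
  define ts where "ts = (\<lambda>i::nat. if i = 0 then 0 else if i = 1 then t else r)"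
  define Xs where "Xs = (\<lambda>i \<omega>. \<gamma> (ts (Suc i)) \<omega> - \<gamma> (ts i) \<omega>)"
  have iv: "indep_vars (\<lambda>_. borel) Xs {..<2}"
    unfolding Xs_def by (rule gind) (use t_pos r in \<open>auto simp: ts_def less_Suc_eq\<close>)
  have "indep_var (PiM {0} (\<lambda>_. borel)) (\<lambda>\<omega>. restrict (\<lambda>i. Xs i \<omega>) {0})
                  (PiM {1} (\<lambda>_. borel)) (\<lambda>\<omega>. restrict (\<lambda>i. Xs i \<omega>) {1})"
    by (rule indep_var_restrict[OF iv]) auto
  then have "indep_var lborel ((\<lambda>f. f 0) \<circ> (\<lambda>\<omega>. restrict (\<lambda>i. Xs i \<omega>) {0}))
                       lborel ((\<lambda>f. f 1) \<circ> (\<lambda>\<omega>. restrict (\<lambda>i. Xs i \<omega>) {1}))"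
    by (rule indep_var_compose) auto
  then show ?thesis by (simp add: o_def Xs_def ts_def)
qed

lemma beta_lemma:
  assumes r: "t < r" and h[measurable]: "h \<in> borel_measurable borel"
  shows "(\<integral>\<^sup>+\<omega>. h (\<gamma> t \<omega> / \<gamma> r \<omega>) \<partial>M) = (\<integral>\<^sup>+v. h (v/(1+v)) * ennreal (kern r v) \<partial>lborel)"
proof -
  define X where "X = (\<lambda>\<omega>. \<gamma> t \<omega> - \<gamma> 0 \<omega>)"
  define W where "W = (\<lambda>\<omega>. \<gamma> r \<omega> - \<gamma> t \<omega>)"
  define f1 where "f1 = (\<lambda>x. ennreal (gamma_density t x))"
  define f2 where "f2 = (\<lambda>x. ennreal (gamma_density (r-t) x))"
  have dX: "distributed M lborel X f1" unfolding X_def f1_def using gdist[of 0 t] t_pos by simp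
  have dW: "distributed M lborel W f2" unfolding W_def f2_def using gdist[of t r] t_pos r by simp
  have mX[measurable]: "X \<in> borel_measurable M" using dX by (simp add: distributed_def)
  have mW[measurable]: "W \<in> borel_measurable M" using dW by (simp add: distributed_def)
  have eX: "distr M lborel X = density lborel f1" using dX by (simp add: distributed_def)
  have eW: "distr M lborel W = density lborel f2" using dW by (simp add: distributed_def)
  have ind: "indep_var lborel X lborel W" unfolding X_def W_def by (rule indep_XW[OF r])
  have joint: "distr M lborel X \<Otimes>\<^sub>M distr M lborel W = distr M (lborel \<Otimes>\<^sub>M lborel) (\<lambda>x. (X x, W x))"
    using ind by (simp add: indep_var_distribution_eq)
  interpret DX: prob_space "distr M lborel X" by (rule prob_space_distr) simp
  interpret DW: prob_space "distr M lborel W" by (rule prob_space_distr) simp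
  interpret P: pair_prob_space "distr M lborel X" "distr M lborel W" ..
  define H where "H = (\<lambda>p::real\<times>real. h (fst p / (fst p + snd p)))"
  have mH[measurable]: "H \<in> borel_measurable (lborel \<Otimes>\<^sub>M lborel)" unfolding H_def by measurable
  have "(\<integral>\<^sup>+\<omega>. h (\<gamma> t \<omega> / \<gamma> r \<omega>) \<partial>M) = (\<integral>\<^sup>+\<omega>. H (X \<omega>, W \<omega>) \<partial>M)"
    by (intro nn_integral_cong) (simp add: H_def X_def W_def g0)
  also have "\<dots> = (\<integral>\<^sup>+p. H p \<partial>distr M (lborel \<Otimes>\<^sub>M lborel) (\<lambda>x. (X x, W x)))"
    by (subst nn_integral_distr) auto
  also have "\<dots> = (\<integral>\<^sup>+p. H p \<partial>(distr M lborel X \<Otimes>\<^sub>M distr M lborel W))"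
    by (simp add: joint)
  also have "\<dots> = (\<integral>\<^sup>+w. (\<integral>\<^sup>+x. H (x, w) \<partial>distr M lborel X) \<partial>distr M lborel W)"
    by (rule P.nn_integral_snd[symmetric]) simp
  also have "\<dots> = (\<integral>\<^sup>+w. f2 w * (\<integral>\<^sup>+x. f1 x * h (x/(x+w)) \<partial>lborel) \<partial>lborel)"
    unfolding eX eW H_def
    by (subst nn_integral_density) (auto simp: f1_def f2_def nn_integral_density)
  also have "\<dots> = (\<integral>\<^sup>+w. (\<integral>\<^sup>+v. ennreal (gamma_density (r-t) w * w * gamma_density t (w * v)) * h (v/(1+v)) \<partial>lborel) \<partial>lborel)"
    unfolding f1_def f2_def by (intro nn_integral_cong x_subst[OF r h])
  also have "\<dots> = (\<integral>\<^sup>+v. (\<integral>\<^sup>+w. ennreal (gamma_density (r-t) w * w * gamma_density t (w * v)) * h (v/(1+v)) \<partial>lborel) \<partial>lborel)"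
    by (rule lborel_pair.Fubini') simp
  also have "\<dots> = (\<integral>\<^sup>+v. (\<integral>\<^sup>+w. ennreal (gamma_density (r-t) w * w * gamma_density t (w * v)) \<partial>lborel) * h (v/(1+v)) \<partial>lborel)"
    by (intro nn_integral_cong) (simp add: nn_integral_multc)
  also have "\<dots> = (\<integral>\<^sup>+v. h (v/(1+v)) * ennreal (kern r v) \<partial>lborel)"
    by (intro nn_integral_cong, subst w_int[OF r]) (rule mult.commute)
  finally show ?thesis .
qed

end

definition Gk :: "nat \<Rightarrow> real \<Rightarrow> (nat \<times> nat \<Rightarrow> real) \<Rightarrow> real" where
  "Gk k r y = y (k, nat (\<lfloor>2^k * r\<rfloor> + 1))"

definition GG :: "real \<Rightarrow> (nat \<times> nat \<Rightarrow> real) \<Rightarrow> real" where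
  "GG r y = lim (\<lambda>k. Gk k r y)"

abbreviation PS :: "(nat \<times> nat \<Rightarrow> real) measure" where
  "PS \<equiv> PiM UNIV (\<lambda>_. borel)"

lemma Gk_measurable: "(\<lambda>p. Gk k (fst p) (snd p)) \<in> borel_measurable (borel \<Otimes>\<^sub>M PS)"
proof -
  have f: "\<And>j::nat. (\<lambda>p::real \<times> (nat \<times> nat \<Rightarrow> real). snd p (k, j)) \<in> borel_measurable (borel \<Otimes>\<^sub>M PS)"
    by measurable
  have g1: "(\<lambda>p::real \<times> (nat \<times> nat \<Rightarrow> real). \<lfloor>2^k * fst p\<rfloor>) \<in> measurable (borel \<Otimes>\<^sub>M PS) (count_space UNIV)"
    using measurable_compose[OF _ measurable_real_floor, of "\<lambda>p::real \<times> (nat \<times> nat \<Rightarrow> real). 2^k * fst p"]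
    by measurable
  have g2: "(\<lambda>z::int. nat (z + 1)) \<in> measurable (count_space UNIV) (count_space UNIV)"
    by simp
  have g: "(\<lambda>p::real \<times> (nat \<times> nat \<Rightarrow> real). nat (\<lfloor>2^k * fst p\<rfloor> + 1)) \<in> measurable (borel \<Otimes>\<^sub>M PS) (count_space UNIV)"
    using measurable_compose[OF g1 g2] .
  show ?thesis using measurable_compose_countable[OF f g] by (simp add: Gk_def)
qed

lemma GG_measurable: "(\<lambda>p. GG (fst p) (snd p)) \<in> borel_measurable (borel \<Otimes>\<^sub>M PS)"
  unfolding GG_def by (intro borel_measurable_lim_metric Gk_measurable)

lemma dyadic_lim:
  fixes r :: real assumes "0 \<le> r"
  shows "LIM k sequentially. real (nat (\<lfloor>2^k * r\<rfloor> + 1)) / 2^k :> at_right r"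
proof -
  define d where "d k = (real_of_int \<lfloor>2^k * r\<rfloor> + 1) / 2^k" for k :: nat
  have eq: "real (nat (\<lfloor>2^k * r\<rfloor> + 1)) / 2^k = d k" for k
    using assms by (simp add: d_def)
  have gt: "r < d k" for k
  proof -
    have "2^k * r < real_of_int \<lfloor>2^k * r\<rfloor> + 1" by linarith
    then show ?thesis by (simp add: d_def field_simps)
  qed
  have le: "d k \<le> r + (1/2)^k" for k
  proof -
    have "real_of_int \<lfloor>2^k * r\<rfloor> \<le> 2^k * r" by linarith
    then show ?thesis by (simp add: d_def field_simps power_divide)
  qed
  have "(\<lambda>k. r + (1/2::real)^k) \<longlonglongrightarrow> r + 0"
    by (intro tendsto_add tendsto_const LIMSEQ_power_zero) simp
  then have h: "(\<lambda>k. r + (1/2::real)^k) \<longlonglongrightarrow> r" by simp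
  have "d \<longlonglongrightarrow> r"
  proof (rule tendsto_sandwich[of "\<lambda>_. r" d sequentially "\<lambda>k. r + (1/2)^k"])
    show "eventually (\<lambda>k. r \<le> d k) sequentially"
      by (intro always_eventually allI less_imp_le gt)
    show "eventually (\<lambda>k. d k \<le> r + (1/2)^k) sequentially"
      by (intro always_eventually allI le)
  qed (use h in auto)
  moreover have "eventually (\<lambda>k. d k \<in> {r<..} \<and> d k \<noteq> r) sequentially"
  proof (intro always_eventually allI)
    fix k show "d k \<in> {r<..} \<and> d k \<noteq> r" using gt[of k] by simp
  qed
  ultimately show ?thesis unfolding eq filterlim_at by simp
qed

context gsetup begin

definition Y :: "'a \<Rightarrow> nat \<times> nat \<Rightarrow> real" where
  "Y \<omega> = (\<lambda>(k, j). \<gamma> (real j / 2^k) \<omega>)"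

definition ZZ :: "real \<Rightarrow> (nat \<times> nat \<Rightarrow> real) \<Rightarrow> real" where
  "ZZ r y = GG (min t r) y / GG r y"

lemma ZZ_measurable[measurable]: "(\<lambda>p. ZZ (fst p) (snd p)) \<in> borel_measurable (borel \<Otimes>\<^sub>M PS)"
proof -
  have a: "(\<lambda>p. (min t (fst p), snd p)) \<in> measurable (borel \<Otimes>\<^sub>M PS) (borel \<Otimes>\<^sub>M PS)" by measurable
  have "(\<lambda>p. GG (min t (fst p)) (snd p)) \<in> borel_measurable (borel \<Otimes>\<^sub>M PS)"
    using measurable_compose[OF a GG_measurable] by simp
  then show ?thesis unfolding ZZ_def using GG_measurable by measurable
qed

lemma ZZ_meas_r[measurable]: "(\<lambda>y. ZZ r y) \<in> borel_measurable PS"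
proof -
  have "(\<lambda>y. (r, y)) \<in> measurable PS (borel \<Otimes>\<^sub>M PS)" by measurable
  from measurable_compose[OF this ZZ_measurable] show ?thesis by simp
qed

lemma GG_Y:
  assumes \<omega>: "\<omega> \<in> space M" and r: "0 \<le> r"
  shows "GG r (Y \<omega>) = \<gamma> r \<omega>"
proof -
  have c: "((\<lambda>u. \<gamma> u \<omega>) \<longlongrightarrow> \<gamma> r \<omega>) (at_right r)"
    using gright[OF \<omega> r] by (simp add: continuous_within)
  have "(\<lambda>k. \<gamma> (real (nat (\<lfloor>2^k * r\<rfloor> + 1)) / 2^k) \<omega>) \<longlonglongrightarrow> \<gamma> r \<omega>"
    using filterlim_compose[OF c dyadic_lim[OF r]] by simp
  then have "(\<lambda>k. Gk k r (Y \<omega>)) \<longlonglongrightarrow> \<gamma> r \<omega>"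
    by (simp add: Gk_def Y_def)
  then show ?thesis unfolding GG_def by (rule limI)
qed

lemma zeta_ZZ:
  assumes \<omega>: "\<omega> \<in> space M"
  shows "zeta \<gamma> \<tau> t \<omega> = ZZ (\<tau> \<omega>) (Y \<omega>)"
proof -
  have p: "0 \<le> \<tau> \<omega>" "0 \<le> min t (\<tau> \<omega>)" using tau_pos \<omega> t_pos by (auto simp: less_imp_le)
  show ?thesis unfolding zeta_def ZZ_def GG_Y[OF \<omega> p(1)] GG_Y[OF \<omega> p(2)] ..
qed

lemma Y_meas_gen:
  "Y \<in> measurable (sigma (space M) (\<Union>s\<in>{0..}. {\<gamma> s -` A \<inter> space M | A. A \<in> sets borel})) PS"
proof -
  let ?Gen = "(\<Union>s\<in>{0..}. {\<gamma> s -` A \<inter> space M | A. A \<in> sets borel})"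
  have sub: "?Gen \<subseteq> Pow (space M)" by auto
  have "(\<lambda>\<omega> i. Y \<omega> i) \<in> measurable (sigma (space M) ?Gen) PS"
  proof (rule measurable_PiM_single')
    fix i :: "nat \<times> nat"
    obtain k j where i: "i = (k, j)" by (cases i)
    let ?s = "real j / 2^k"
    have s: "0 \<le> ?s" by simp
    show "(\<lambda>\<omega>. Y \<omega> i) \<in> measurable (sigma (space M) ?Gen) borel"
    proof (rule measurableI)
      fix A :: "real set" assume A: "A \<in> sets borel"
      have "(\<lambda>\<omega>. Y \<omega> i) -` A \<inter> space (sigma (space M) ?Gen) = \<gamma> ?s -` A \<inter> space M"
        by (auto simp: Y_def i space_measure_of_conv)
      also have "\<dots> \<in> ?Gen" using A s by blast
      then have "\<gamma> ?s -` A \<inter> space M \<in> sets (sigma (space M) ?Gen)"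
        using sub by (auto simp: sets_measure_of)
      finally show "(\<lambda>\<omega>. Y \<omega> i) -` A \<inter> space (sigma (space M) ?Gen) \<in> sets (sigma (space M) ?Gen)" .
    qed simp
  qed simp
  then show ?thesis by simp
qed

lemma Y_meas[measurable]: "Y \<in> measurable M PS"
proof -
  have "(\<lambda>\<omega> i. Y \<omega> i) \<in> measurable M PS"
  proof (rule measurable_PiM_single')
    fix i :: "nat \<times> nat"
    obtain k j where i: "i = (k, j)" by (cases i)
    show "(\<lambda>\<omega>. Y \<omega> i) \<in> borel_measurable M"
      using gmeas[of "real j / 2^k"] by (simp add: Y_def i)
  qed simp
  then show ?thesis by simp
qed

definition Tf :: "'a \<Rightarrow> nat \<times> nat \<Rightarrow> real" where
  "Tf \<omega> = (\<lambda>_. \<tau> \<omega>)"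

lemma Tf_meas_gen:
  "Tf \<in> measurable (sigma (space M) {\<tau> -` A \<inter> space M | A. A \<in> sets borel}) PS"
proof -
  let ?Gen = "{\<tau> -` A \<inter> space M | A. A \<in> sets borel}"
  have sub: "?Gen \<subseteq> Pow (space M)" by auto
  have "(\<lambda>\<omega> i. Tf \<omega> i) \<in> measurable (sigma (space M) ?Gen) PS"
  proof (rule measurable_PiM_single')
    fix i :: "nat \<times> nat"
    show "(\<lambda>\<omega>. Tf \<omega> i) \<in> measurable (sigma (space M) ?Gen) borel"
    proof (rule measurableI)
      fix A :: "real set" assume A: "A \<in> sets borel"
      have "(\<lambda>\<omega>. Tf \<omega> i) -` A \<inter> space (sigma (space M) ?Gen) = \<tau> -` A \<inter> space M"
        by (auto simp: Tf_def space_measure_of_conv)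
      also have "\<dots> \<in> ?Gen" using A by blast
      then have "\<tau> -` A \<inter> space M \<in> sets (sigma (space M) ?Gen)"
        using sub by (auto simp: sets_measure_of)
      finally show "(\<lambda>\<omega>. Tf \<omega> i) -` A \<inter> space (sigma (space M) ?Gen) \<in> sets (sigma (space M) ?Gen)" .
    qed simp
  qed simp
  then show ?thesis by simp
qed

lemma Tf_meas[measurable]: "Tf \<in> measurable M PS"
proof -
  have "(\<lambda>\<omega> i. Tf \<omega> i) \<in> measurable M PS"
    by (rule measurable_PiM_single') (auto simp: Tf_def)
  then show ?thesis by simp
qed

lemma preimg_sub:
  assumes "X \<in> measurable (sigma (space M) Gen) PS" "Gen \<subseteq> Pow (space M)"
  shows "{X -` A \<inter> space M | A. A \<in> sets PS} \<subseteq> sigma_sets (space M) Gen"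
proof
  fix B assume "B \<in> {X -` A \<inter> space M | A. A \<in> sets PS}"
  then obtain A where A: "A \<in> sets PS" and B: "B = X -` A \<inter> space M" by auto
  have "X -` A \<inter> space (sigma (space M) Gen) \<in> sets (sigma (space M) Gen)"
    using measurable_sets[OF assms(1) A] .
  then show "B \<in> sigma_sets (space M) Gen"
    using assms(2) B by (simp add: sets_measure_of space_measure_of_conv)
qed

lemma indep_tau_Y: "indep_var PS Tf PS Y"
proof -
  let ?Gen = "(\<Union>s\<in>{0..}. {\<gamma> s -` A \<inter> space M | A. A \<in> sets borel})"
  let ?GenT = "{\<tau> -` A \<inter> space M | A. A \<in> sets borel}"
  have Ysub: "{Y -` A \<inter> space M | A. A \<in> sets PS} \<subseteq> sigma_sets (space M) ?Gen"
    by (rule preimg_sub[OF Y_meas_gen]) auto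
  have Tsub: "{Tf -` A \<inter> space M | A. A \<in> sets PS} \<subseteq> sigma_sets (space M) ?GenT"
    by (rule preimg_sub[OF Tf_meas_gen]) auto
  have "indep_set (sigma_sets (space M) {Tf -` A \<inter> space M | A. A \<in> sets PS})
                  (sigma_sets (space M) {Y -` A \<inter> space M | A. A \<in> sets PS})"
    using indep unfolding indep_set_def
  proof (rule indep_sets_mono_sets)
    fix i :: bool
    show "case_bool (sigma_sets (space M) {Tf -` A \<inter> space M | A. A \<in> sets PS})
                  (sigma_sets (space M) {Y -` A \<inter> space M | A. A \<in> sets PS}) i
       \<subseteq> case_bool (sigma_sets (space M) ?GenT)
                  (sigma_sets (space M) ?Gen) i"
      using sigma_sets_mono[OF Ysub] sigma_sets_mono[OF Tsub] by (cases i) auto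
  qed
  then show ?thesis by (simp add: indep_var_eq)
qed

lemma fubini_tau:
  assumes f[measurable]: "f \<in> borel_measurable borel" and h[measurable]: "h \<in> borel_measurable borel"
  shows "(\<integral>\<^sup>+\<omega>. f (\<tau> \<omega>) * h (zeta \<gamma> \<tau> t \<omega>) \<partial>M)
       = (\<integral>\<^sup>+r. f r * (\<integral>\<^sup>+\<omega>. h (\<gamma> (min t r) \<omega> / \<gamma> r \<omega>) \<partial>M) \<partial>distr M borel \<tau>)"
proof -
  interpret DT: prob_space "distr M PS Tf" by (rule prob_space_distr) simp
  interpret DY: prob_space "distr M PS Y" by (rule prob_space_distr) simp
  have joint: "distr M PS Tf \<Otimes>\<^sub>M distr M PS Y = distr M (PS \<Otimes>\<^sub>M PS) (\<lambda>x. (Tf x, Y x))"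
    using indep_tau_Y by (simp add: indep_var_distribution_eq)
  define F where "F = (\<lambda>p::(nat \<times> nat \<Rightarrow> real) \<times> (nat \<times> nat \<Rightarrow> real). f (fst p (0,0)) * h (ZZ (fst p (0,0)) (snd p)))"
  have mZ: "(\<lambda>p::(nat \<times> nat \<Rightarrow> real) \<times> (nat \<times> nat \<Rightarrow> real). ZZ (fst p (0,0)) (snd p)) \<in> borel_measurable (PS \<Otimes>\<^sub>M PS)"
  proof -
    have "(\<lambda>p::(nat \<times> nat \<Rightarrow> real) \<times> (nat \<times> nat \<Rightarrow> real). (fst p (0,0), snd p)) \<in> measurable (PS \<Otimes>\<^sub>M PS) (borel \<Otimes>\<^sub>M PS)"
      by measurable
    from measurable_compose[OF this ZZ_measurable] show ?thesis by simp
  qed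
  have mF[measurable]: "F \<in> borel_measurable (PS \<Otimes>\<^sub>M PS)" unfolding F_def using mZ by measurable
  have "(\<integral>\<^sup>+\<omega>. f (\<tau> \<omega>) * h (zeta \<gamma> \<tau> t \<omega>) \<partial>M) = (\<integral>\<^sup>+\<omega>. F (Tf \<omega>, Y \<omega>) \<partial>M)"
    by (intro nn_integral_cong) (simp add: F_def zeta_ZZ Tf_def)
  also have "\<dots> = (\<integral>\<^sup>+p. F p \<partial>distr M (PS \<Otimes>\<^sub>M PS) (\<lambda>x. (Tf x, Y x)))"
    by (subst nn_integral_distr) auto
  also have "\<dots> = (\<integral>\<^sup>+p. F p \<partial>(distr M PS Tf \<Otimes>\<^sub>M distr M PS Y))"
    by (simp add: joint)
  also have "\<dots> = (\<integral>\<^sup>+x. (\<integral>\<^sup>+y. F (x, y) \<partial>distr M PS Y) \<partial>distr M PS Tf)"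
    by (rule DY.nn_integral_fst[symmetric]) simp
  also have "\<dots> = (\<integral>\<^sup>+\<omega>. (\<integral>\<^sup>+y. F (Tf \<omega>, y) \<partial>distr M PS Y) \<partial>M)"
    by (subst nn_integral_distr) (auto intro!: DY.borel_measurable_nn_integral)
  also have "\<dots> = (\<integral>\<^sup>+\<omega>. (\<lambda>r. f r * (\<integral>\<^sup>+\<omega>. h (ZZ r (Y \<omega>)) \<partial>M)) (\<tau> \<omega>) \<partial>M)"
    unfolding F_def Tf_def
    apply (intro nn_integral_cong)
    apply simp
    apply (subst nn_integral_cmult)
     apply simp
    apply (subst nn_integral_distr)
      apply simp_all
    done
  also have "\<dots> = (\<integral>\<^sup>+r. f r * (\<integral>\<^sup>+\<omega>. h (ZZ r (Y \<omega>)) \<partial>M) \<partial>distr M borel \<tau>)"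
  proof (subst nn_integral_distr)
    have m1: "(\<lambda>p. h (ZZ (fst p) (snd p))) \<in> borel_measurable (borel \<Otimes>\<^sub>M PS)" by measurable
    have pm: "(\<lambda>p. (fst p, Y (snd p))) \<in> measurable (borel \<Otimes>\<^sub>M M) (borel \<Otimes>\<^sub>M PS)"
      by measurable
    have m2: "(\<lambda>p. h (ZZ (fst p) (Y (snd p)))) \<in> borel_measurable (borel \<Otimes>\<^sub>M M)"
      using measurable_compose[OF pm m1] by simp
    have m3: "(\<lambda>r. \<integral>\<^sup>+\<omega>. h (ZZ r (Y \<omega>)) \<partial>M) \<in> borel_measurable borel"
      by (rule borel_measurable_nn_integral) (simp add: split_beta' m2)
    show "(\<lambda>r. f r * (\<integral>\<^sup>+\<omega>. h (ZZ r (Y \<omega>)) \<partial>M)) \<in> borel_measurable (distr M borel \<tau>)"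
      using m3 by simp
  qed auto
  also have "\<dots> = (\<integral>\<^sup>+r. f r * (\<integral>\<^sup>+\<omega>. h (\<gamma> (min t r) \<omega> / \<gamma> r \<omega>) \<partial>M) \<partial>distr M borel \<tau>)"
  proof (rule nn_integral_cong_AE)
    have "AE r in distr M borel \<tau>. 0 < r"
      using tau_pos by (subst AE_distr_iff) auto
    then show "AE r in distr M borel \<tau>. f r * (\<integral>\<^sup>+\<omega>. h (ZZ r (Y \<omega>)) \<partial>M) = f r * (\<integral>\<^sup>+\<omega>. h (\<gamma> (min t r) \<omega> / \<gamma> r \<omega>) \<partial>M)"
    proof (rule AE_mp, intro AE_I2 impI)
      fix r :: real assume r: "0 < r"
      have "(\<integral>\<^sup>+\<omega>. h (ZZ r (Y \<omega>)) \<partial>M) = (\<integral>\<^sup>+\<omega>. h (\<gamma> (min t r) \<omega> / \<gamma> r \<omega>) \<partial>M)"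
        using r t_pos by (intro nn_integral_cong) (simp add: ZZ_def GG_Y)
      then show "f r * (\<integral>\<^sup>+\<omega>. h (ZZ r (Y \<omega>)) \<partial>M) = f r * (\<integral>\<^sup>+\<omega>. h (\<gamma> (min t r) \<omega> / \<gamma> r \<omega>) \<partial>M)"
        by simp
    qed
  qed
  finally show ?thesis .
qed

end

context gsetup begin

abbreviation "D \<equiv> distr M borel \<tau>"

definition Kr :: "real \<Rightarrow> (real \<Rightarrow> ennreal) \<Rightarrow> ennreal" where
  "Kr r h = (if r \<le> t then h 1 else \<integral>\<^sup>+v. h (v/(1+v)) * ennreal (kern r v) \<partial>lborel)"

lemma ratio_K:
  assumes r: "0 < r" and h[measurable]: "h \<in> borel_measurable borel"
  shows "(\<integral>\<^sup>+\<omega>. h (\<gamma> (min t r) \<omega> / \<gamma> r \<omega>) \<partial>M) = Kr r h"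
proof (cases "r \<le> t")
  case True
  have "(\<integral>\<^sup>+\<omega>. h (\<gamma> (min t r) \<omega> / \<gamma> r \<omega>) \<partial>M) = (\<integral>\<^sup>+\<omega>. h 1 \<partial>M)"
  proof (rule nn_integral_cong_AE)
    show "AE \<omega> in M. h (\<gamma> (min t r) \<omega> / \<gamma> r \<omega>) = h 1"
      using gpos[OF r]
    proof (rule AE_mp, intro AE_I2 impI)
      fix \<omega> assume "0 < \<gamma> r \<omega>"
      then show "h (\<gamma> (min t r) \<omega> / \<gamma> r \<omega>) = h 1" using True by (simp add: min_absorb2)
    qed
  qed
  also have "\<dots> = h 1" by (simp add: emeasure_space_1)
  finally show ?thesis using True by (simp add: Kr_def)
next
  case False
  then have "min t r = t" "t < r" by auto
  then show ?thesis using False beta_lemma[of r h] by (simp add: Kr_def)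
qed

lemma AE_D_pos: "AE r in D. 0 < r"
  using tau_pos by (subst AE_distr_iff) auto

lemma NN:
  assumes f[measurable]: "f \<in> borel_measurable borel" and h[measurable]: "h \<in> borel_measurable borel"
  shows "(\<integral>\<^sup>+\<omega>. f (\<tau> \<omega>) * h (zeta \<gamma> \<tau> t \<omega>) \<partial>M) = (\<integral>\<^sup>+r. f r * Kr r h \<partial>D)"
  unfolding fubini_tau[OF f h]
proof (rule nn_integral_cong_AE)
  show "AE r in D. f r * (\<integral>\<^sup>+\<omega>. h (\<gamma> (min t r) \<omega> / \<gamma> r \<omega>) \<partial>M) = f r * Kr r h"
    using AE_D_pos
  proof (rule AE_mp, intro AE_I2 impI)
    fix r :: real assume "0 < r"
    then show "f r * (\<integral>\<^sup>+\<omega>. h (\<gamma> (min t r) \<omega> / \<gamma> r \<omega>) \<partial>M) = f r * Kr r h"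
      by (simp add: ratio_K)
  qed
qed

lemma kern_int_one:
  assumes r: "t < r" shows "(\<integral>\<^sup>+v. ennreal (kern r v) \<partial>lborel) = 1"
  using beta_lemma[OF r, of "\<lambda>_. 1"] by (simp add: emeasure_space_1)

end

context gsetup begin

definition FT :: real where "FT = measure M {\<omega> \<in> space M. \<tau> \<omega> \<le> t}"

definition q :: "real \<Rightarrow> real \<Rightarrow> real" where
  "q s v = (1+v) powr (-s) * Gamma s / Gamma (s - t)"

definition aa :: "real \<Rightarrow> real" where
  "aa v = (if 0 < v then v powr (t-1) / Gamma t else 0)"

definition cst :: "(real \<Rightarrow> real) \<Rightarrow> real" where
  "cst f = 1/FT * (\<integral>r\<in>{0<..t}. f r \<partial>D)"

definition Psi :: "(real \<Rightarrow> real) \<Rightarrow> real \<Rightarrow> ennreal" where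
  "Psi f x = (\<integral>\<^sup>+s. ennreal (f s * phi D t s x) * indicator {t<..} s \<partial>D)"

definition Hf :: "(real \<Rightarrow> real) \<Rightarrow> real \<Rightarrow> ennreal" where
  "Hf f x = ennreal (cst f) * indicator {1} x + Psi f x * indicator {0<..<1} x"

lemma q_measurable[measurable (raw)]:
  assumes [measurable]: "a \<in> borel_measurable N" "b \<in> borel_measurable N"
  shows "(\<lambda>x. q (a x) (b x)) \<in> borel_measurable N"
  unfolding q_def by measurable

lemma aa_measurable[measurable]: "aa \<in> borel_measurable borel"
  unfolding aa_def by measurable

lemma q_nonneg: "t < s \<Longrightarrow> 0 \<le> q s v"
  using t_pos unfolding q_def by (auto intro!: divide_nonneg_pos mult_nonneg_nonneg less_imp_le Gamma_real_pos)

lemma aa_nonneg: "0 \<le> aa v"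
  using t_pos unfolding aa_def by (auto intro!: divide_nonneg_pos Gamma_real_pos)

lemma kern_split:
  assumes r: "t < r" shows "ennreal (kern r v) = ennreal (aa v) * ennreal (q r v)"
proof -
  have "kern r v = aa v * q r v" unfolding kern_def aa_def q_def by (simp add: field_simps)
  then show ?thesis using ennreal_mult[OF aa_nonneg q_nonneg[OF r]] by simp
qed

interpretation DT: prob_space D by (rule prob_space_distr) simp

lemma phi_measurable[measurable (raw)]:
  assumes [measurable]: "a \<in> borel_measurable N" "b \<in> borel_measurable N"
  shows "(\<lambda>x. phi D t (a x) (b x)) \<in> borel_measurable N"
  unfolding phi_def set_lebesgue_integral_def by measurable

lemma Kr_measurable[measurable]:
  assumes [measurable]: "h \<in> borel_measurable borel"
  shows "(\<lambda>r. Kr r h) \<in> borel_measurable borel"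
  unfolding Kr_def by measurable

lemma Psi_measurable[measurable]:
  assumes [measurable]: "f \<in> borel_measurable borel"
  shows "Psi f \<in> borel_measurable borel"
  unfolding Psi_def by measurable

lemma Hf_measurable[measurable]:
  assumes [measurable]: "f \<in> borel_measurable borel"
  shows "Hf f \<in> borel_measurable borel"
  unfolding Hf_def by measurable

lemma emeasure_D_le: "emeasure D {..t} = ennreal FT"
proof -
  have "emeasure D {..t} = emeasure M (\<tau> -` {..t} \<inter> space M)"
    by (subst emeasure_distr) auto
  also have "\<tau> -` {..t} \<inter> space M = {\<omega> \<in> space M. \<tau> \<omega> \<le> t}" by auto
  finally show ?thesis by (simp add: FT_def emeasure_eq_measure)
qed

lemma le_part:
  assumes f[measurable]: "f \<in> borel_measurable borel" and fn: "\<And>r. 0 \<le> f r" and fi: "integrable D f"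
    and FTpos: "0 < FT"
  shows "ennreal (cst f) * emeasure D {..t} = (\<integral>\<^sup>+r. ennreal (f r) * indicator {..t} r \<partial>D)"
proof -
  have int: "integrable D (\<lambda>r. indicator {0<..t} r * f r)"
    using integrable_real_mult_indicator[of "{0<..t}" D f] fi by (simp add: mult.commute)
  have "(\<integral>\<^sup>+r. ennreal (f r) * indicator {..t} r \<partial>D) = (\<integral>\<^sup>+r. ennreal (indicator {0<..t} r * f r) \<partial>D)"
  proof (rule nn_integral_cong_AE)
    show "AE r in D. ennreal (f r) * indicator {..t} r = ennreal (indicator {0<..t} r * f r)"
      using AE_D_pos by (rule AE_mp) (auto intro!: AE_I2 simp: indicator_def)
  qed
  also have "\<dots> = ennreal (\<integral>r. indicator {0<..t} r * f r \<partial>D)"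
    by (rule nn_integral_eq_integral[OF int]) (auto simp: fn)
  also have "(\<integral>r. indicator {0<..t} r * f r \<partial>D) = (\<integral>r\<in>{0<..t}. f r \<partial>D)"
    by (simp add: set_lebesgue_integral_def)
  also have "\<dots> = cst f * FT" using FTpos by (simp add: cst_def)
  finally have e: "(\<integral>\<^sup>+r. ennreal (f r) * indicator {..t} r \<partial>D) = ennreal (cst f * FT)" .
  have cpos: "0 \<le> cst f" unfolding cst_def set_lebesgue_integral_def
    using FTpos fn by (auto intro!: integral_nonneg mult_nonneg_nonneg)
  show ?thesis unfolding e emeasure_D_le using ennreal_mult[OF cpos, of FT] FTpos by simp
qed

end

context gsetup begin

interpretation DT: prob_space D by (rule prob_space_distr) simp
interpretation PL: pair_sigma_finite lborel D ..

definition Den :: "real \<Rightarrow> real" where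
  "Den v = (\<integral>s\<in>{t<..}. (1 - v/(1+v)) powr s * (Gamma s / Gamma (s - t)) \<partial>D)"

definition Qn :: "real \<Rightarrow> real \<Rightarrow> ennreal" where
  "Qn s v = ennreal (q s v) * indicator {t<..} s"

lemma Qn_measurable[measurable (raw)]:
  assumes [measurable]: "a \<in> borel_measurable N" "b \<in> borel_measurable N"
  shows "(\<lambda>x. Qn (a x) (b x)) \<in> borel_measurable N"
  unfolding Qn_def by measurable

lemma one_minus:
  assumes v: "0 < v" shows "(1 - v/(1+v)) powr s * (Gamma s / Gamma (s - t)) = q s v"
proof -
  have "1 - v/(1+v) = 1/(1+v)" using v by (simp add: field_simps)
  then have "(1 - v/(1+v)) powr s = (1+v) powr (-s)"
    using v by (simp add: powr_divide powr_minus_divide)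
  then show ?thesis by (simp add: q_def)
qed

lemma Den_eq:
  assumes v: "0 < v" and fin: "(\<integral>\<^sup>+s. Qn s v \<partial>D) \<noteq> \<infinity>"
  shows "ennreal (Den v) = (\<integral>\<^sup>+s. Qn s v \<partial>D)"
proof -
  have "Den v = (\<integral>s. indicator {t<..} s * q s v \<partial>D)"
    unfolding Den_def set_lebesgue_integral_def one_minus[OF v] by simp
  also have "\<dots> = enn2real (\<integral>\<^sup>+s. ennreal (indicator {t<..} s * q s v) \<partial>D)"
    by (rule integral_eq_nn_integral) (auto intro!: AE_I2 simp: indicator_def q_nonneg)
  also have "(\<integral>\<^sup>+s. ennreal (indicator {t<..} s * q s v) \<partial>D) = (\<integral>\<^sup>+s. Qn s v \<partial>D)"
    by (intro nn_integral_cong) (simp add: Qn_def indicator_def)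
  finally show ?thesis using fin by (simp add: ennreal_enn2real less_top)
qed

lemma phi_eq:
  assumes v: "0 < v" and s: "t < s"
  shows "phi D t s (v/(1+v)) = q s v / Den v"
proof -
  have x: "v/(1+v) \<in> {0<..<1}" using v by (auto simp: field_simps)
  show ?thesis unfolding phi_def Den_def one_minus[OF v] using x by simp
qed

lemma Psi_Den:
  assumes f[measurable]: "f \<in> borel_measurable borel" and fn: "\<And>r. 0 \<le> f r"
    and v: "0 < v" and fin: "(\<integral>\<^sup>+s. Qn s v \<partial>D) \<noteq> \<infinity>"
  shows "Psi f (v/(1+v)) * (\<integral>\<^sup>+s. Qn s v \<partial>D) = (\<integral>\<^sup>+s. ennreal (f s) * Qn s v \<partial>D)"
proof (cases "(\<integral>\<^sup>+s. Qn s v \<partial>D) = 0")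
  case True
  then have "AE s in D. Qn s v = 0" by (subst (asm) nn_integral_0_iff_AE) auto
  then have "(\<integral>\<^sup>+s. ennreal (f s) * Qn s v \<partial>D) = (\<integral>\<^sup>+s. 0 \<partial>D)"
  proof (intro nn_integral_cong_AE)
    show "AE s in D. ennreal (f s) * Qn s v = 0"
      using \<open>AE s in D. Qn s v = 0\<close> by (rule AE_mp) (auto intro!: AE_I2)
  qed
  then show ?thesis using True by simp
next
  case False
  have DE: "ennreal (Den v) = (\<integral>\<^sup>+s. Qn s v \<partial>D)" by (rule Den_eq[OF v fin])
  with False have Dpos: "0 < Den v"
    by (metis ennreal_eq_0_iff not_less)
  have "Psi f (v/(1+v)) = (\<integral>\<^sup>+s. ennreal (f s * (q s v / Den v)) * indicator {t<..} s \<partial>D)"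
    unfolding Psi_def by (intro nn_integral_cong) (simp add: phi_eq[OF v] indicator_def)
  then have "Psi f (v/(1+v)) * (\<integral>\<^sup>+s. Qn s v \<partial>D) =
      (\<integral>\<^sup>+s. ennreal (f s * (q s v / Den v)) * indicator {t<..} s * ennreal (Den v) \<partial>D)"
    unfolding DE[symmetric] by (simp add: nn_integral_multc)
  also have "\<dots> = (\<integral>\<^sup>+s. ennreal (f s) * Qn s v \<partial>D)"
  proof (intro nn_integral_cong)
    fix s :: real
    show "ennreal (f s * (q s v / Den v)) * indicator {t<..} s * ennreal (Den v) = ennreal (f s) * Qn s v"
    proof (cases "t < s")
      case True
      have a: "0 \<le> f s * (q s v / Den v)" using fn q_nonneg[OF True] Dpos by simp
      have "ennreal (f s * (q s v / Den v)) * ennreal (Den v) = ennreal (f s * (q s v / Den v) * Den v)"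
        using ennreal_mult[OF a, of "Den v"] Dpos by simp
      also have "f s * (q s v / Den v) * Den v = f s * q s v" using Dpos by simp
      also have "ennreal (f s * q s v) = ennreal (f s) * ennreal (q s v)"
        using ennreal_mult[OF fn q_nonneg[OF True]] .
      finally show ?thesis using True by (simp add: Qn_def)
    qed (simp add: Qn_def)
  qed
  finally show ?thesis .
qed

lemma Kr_gt:
  assumes r: "t < r" and h[measurable]: "h \<in> borel_measurable borel"
  shows "Kr r h = (\<integral>\<^sup>+v. h (v/(1+v)) * ennreal (aa v) * ennreal (q r v) \<partial>lborel)"
  using r unfolding Kr_def by (auto simp: kern_split[OF r] mult.assoc intro!: nn_integral_cong)

lemma fin_AE: "AE v in lborel. 0 < v \<longrightarrow> (\<integral>\<^sup>+s. Qn s v \<partial>D) \<noteq> \<infinity>"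
proof -
  have "(\<integral>\<^sup>+v. ennreal (aa v) * (\<integral>\<^sup>+r. Qn r v \<partial>D) \<partial>lborel)
      = (\<integral>\<^sup>+v. (\<integral>\<^sup>+r. ennreal (aa v) * Qn r v \<partial>D) \<partial>lborel)"
    by (intro nn_integral_cong) (simp add: nn_integral_cmult)
  also have "\<dots> = (\<integral>\<^sup>+r. (\<integral>\<^sup>+v. ennreal (aa v) * Qn r v \<partial>lborel) \<partial>D)"
    by (rule PL.Fubini'[symmetric]) simp
  also have "\<dots> = (\<integral>\<^sup>+r. indicator {t<..} r \<partial>D)"
  proof (intro nn_integral_cong)
    fix r :: real
    show "(\<integral>\<^sup>+v. ennreal (aa v) * Qn r v \<partial>lborel) = indicator {t<..} r"
    proof (cases "t < r")
      case True
      have "(\<integral>\<^sup>+v. ennreal (aa v) * Qn r v \<partial>lborel) = (\<integral>\<^sup>+v. ennreal (kern r v) \<partial>lborel)"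
        using True by (intro nn_integral_cong) (simp add: Qn_def kern_split[OF True])
      then show ?thesis using True kern_int_one[OF True] by simp
    qed (simp add: Qn_def)
  qed
  also have "\<dots> \<le> 1"
    by (simp add: DT.emeasure_le_1)
  finally have "(\<integral>\<^sup>+v. ennreal (aa v) * (\<integral>\<^sup>+r. Qn r v \<partial>D) \<partial>lborel) \<noteq> \<infinity>"
    by (auto simp: top_unique)
  then have "AE v in lborel. ennreal (aa v) * (\<integral>\<^sup>+r. Qn r v \<partial>D) \<noteq> \<infinity>"
    by (intro nn_integral_PInf_AE) simp_all
  then show ?thesis
  proof (rule AE_mp, intro AE_I2 impI)
    fix v :: real assume a: "ennreal (aa v) * (\<integral>\<^sup>+r. Qn r v \<partial>D) \<noteq> \<infinity>" and v: "0 < v"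
    have "0 < aa v" using v t_pos by (simp add: aa_def Gamma_real_pos)
    then show "(\<integral>\<^sup>+s. Qn s v \<partial>D) \<noteq> \<infinity>" using a by (auto simp: ennreal_mult_eq_top_iff)
  qed
qed

lemma gt_part:
  assumes f[measurable]: "f \<in> borel_measurable borel" and fn: "\<And>r. 0 \<le> f r"
    and B[measurable]: "B \<in> sets borel"
  shows "(\<integral>\<^sup>+r. ennreal (f r) * Kr r (indicator B) * indicator {t<..} r \<partial>D)
       = (\<integral>\<^sup>+r. Kr r (\<lambda>x. Hf f x * indicator B x) * indicator {t<..} r \<partial>D)"
proof -
  define G1 where "G1 v = Hf f (v/(1+v)) * indicator B (v/(1+v)) * ennreal (aa v)" for v
  have G1m[measurable]: "G1 \<in> borel_measurable borel" unfolding G1_def by measurable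
  have "(\<integral>\<^sup>+r. Kr r (\<lambda>x. Hf f x * indicator B x) * indicator {t<..} r \<partial>D)
      = (\<integral>\<^sup>+r. (\<integral>\<^sup>+v. G1 v * Qn r v \<partial>lborel) \<partial>D)"
  proof (intro nn_integral_cong)
    fix r :: real
    show "Kr r (\<lambda>x. Hf f x * indicator B x) * indicator {t<..} r = (\<integral>\<^sup>+v. G1 v * Qn r v \<partial>lborel)"
    proof (cases "t < r")
      case True
      have "Kr r (\<lambda>x. Hf f x * indicator B x) =
          (\<integral>\<^sup>+v. Hf f (v/(1+v)) * indicator B (v/(1+v)) * ennreal (aa v) * ennreal (q r v) \<partial>lborel)"
        by (rule Kr_gt[OF True]) measurable
      then show ?thesis using True
        by (auto simp: G1_def Qn_def mult.assoc intro!: nn_integral_cong)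
    qed (simp add: Qn_def)
  qed
  also have "\<dots> = (\<integral>\<^sup>+v. (\<integral>\<^sup>+r. G1 v * Qn r v \<partial>D) \<partial>lborel)"
    by (rule PL.Fubini') simp
  also have "\<dots> = (\<integral>\<^sup>+v. G1 v * (\<integral>\<^sup>+r. Qn r v \<partial>D) \<partial>lborel)"
    by (intro nn_integral_cong) (simp add: nn_integral_cmult)
  also have "\<dots> = (\<integral>\<^sup>+v. ennreal (aa v) * indicator B (v/(1+v)) * (\<integral>\<^sup>+s. ennreal (f s) * Qn s v \<partial>D) \<partial>lborel)"
  proof (rule nn_integral_cong_AE)
    show "AE v in lborel. G1 v * (\<integral>\<^sup>+r. Qn r v \<partial>D) =
       ennreal (aa v) * indicator B (v/(1+v)) * (\<integral>\<^sup>+s. ennreal (f s) * Qn s v \<partial>D)"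
      using fin_AE
    proof (rule AE_mp, intro AE_I2 impI)
      fix v :: real assume fv: "0 < v \<longrightarrow> (\<integral>\<^sup>+s. Qn s v \<partial>D) \<noteq> \<infinity>"
      show "G1 v * (\<integral>\<^sup>+r. Qn r v \<partial>D) =
         ennreal (aa v) * indicator B (v/(1+v)) * (\<integral>\<^sup>+s. ennreal (f s) * Qn s v \<partial>D)"
      proof (cases "0 < v")
        case True
        have x: "v/(1+v) \<in> {0<..<1}" "v/(1+v) \<noteq> 1" using True by (auto simp: field_simps)
        have "Hf f (v/(1+v)) = Psi f (v/(1+v))" using x by (simp add: Hf_def)
        then have "G1 v * (\<integral>\<^sup>+r. Qn r v \<partial>D) = ennreal (aa v) * indicator B (v/(1+v)) *
            (Psi f (v/(1+v)) * (\<integral>\<^sup>+r. Qn r v \<partial>D))"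
          by (simp add: G1_def ac_simps)
        also have "Psi f (v/(1+v)) * (\<integral>\<^sup>+r. Qn r v \<partial>D) = (\<integral>\<^sup>+s. ennreal (f s) * Qn s v \<partial>D)"
          using Psi_Den[OF f fn True] fv True by simp
        finally show ?thesis .
      qed (simp add: G1_def aa_def)
    qed
  qed
  also have "\<dots> = (\<integral>\<^sup>+v. (\<integral>\<^sup>+s. ennreal (aa v) * indicator B (v/(1+v)) * (ennreal (f s) * Qn s v) \<partial>D) \<partial>lborel)"
    by (intro nn_integral_cong) (simp add: nn_integral_cmult)
  also have "\<dots> = (\<integral>\<^sup>+s. (\<integral>\<^sup>+v. ennreal (aa v) * indicator B (v/(1+v)) * (ennreal (f s) * Qn s v) \<partial>lborel) \<partial>D)"
    by (rule PL.Fubini'[symmetric]) simp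
  also have "\<dots> = (\<integral>\<^sup>+r. ennreal (f r) * Kr r (indicator B) * indicator {t<..} r \<partial>D)"
  proof (intro nn_integral_cong)
    fix s :: real
    show "(\<integral>\<^sup>+v. ennreal (aa v) * indicator B (v/(1+v)) * (ennreal (f s) * Qn s v) \<partial>lborel)
        = ennreal (f s) * Kr s (indicator B) * indicator {t<..} s"
    proof (cases "t < s")
      case True
      have "(\<integral>\<^sup>+v. ennreal (aa v) * indicator B (v/(1+v)) * (ennreal (f s) * Qn s v) \<partial>lborel)
          = (\<integral>\<^sup>+v. ennreal (f s) * (indicator B (v/(1+v)) * ennreal (aa v) * ennreal (q s v)) \<partial>lborel)"
        using True by (intro nn_integral_cong) (simp add: Qn_def ac_simps)
      also have "\<dots> = ennreal (f s) * Kr s (indicator B)"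
        by (simp add: nn_integral_cmult Kr_gt[OF True])
      finally show ?thesis using True by simp
    qed (simp add: Qn_def)
  qed
  finally show ?thesis ..
qed

end

context gsetup begin

interpretation DT: prob_space D by (rule prob_space_distr) simp

lemma split_t:
  assumes [measurable]: "F \<in> borel_measurable borel"
  shows "(\<integral>\<^sup>+r. F r \<partial>D) = (\<integral>\<^sup>+r. F r * indicator {..t} r \<partial>D) + (\<integral>\<^sup>+r. F r * indicator {t<..} r \<partial>D)"
proof -
  have "(\<integral>\<^sup>+r. F r \<partial>D) = (\<integral>\<^sup>+r. F r * indicator {..t} r + F r * indicator {t<..} r \<partial>D)"
    by (intro nn_integral_cong) (auto simp: indicator_def)
  also have "\<dots> = (\<integral>\<^sup>+r. F r * indicator {..t} r \<partial>D) + (\<integral>\<^sup>+r. F r * indicator {t<..} r \<partial>D)"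
    by (rule nn_integral_add) simp_all
  finally show ?thesis .
qed

lemma identity:
  assumes f[measurable]: "f \<in> borel_measurable borel" and fn: "\<And>r. 0 \<le> f r" and fi: "integrable D f"
    and FTpos: "0 < FT" and B[measurable]: "B \<in> sets borel"
  shows "(\<integral>\<^sup>+\<omega>. ennreal (f (\<tau> \<omega>)) * indicator B (zeta \<gamma> \<tau> t \<omega>) \<partial>M)
       = (\<integral>\<^sup>+\<omega>. Hf f (zeta \<gamma> \<tau> t \<omega>) * indicator B (zeta \<gamma> \<tau> t \<omega>) \<partial>M)"
proof -
  have L: "(\<integral>\<^sup>+\<omega>. ennreal (f (\<tau> \<omega>)) * indicator B (zeta \<gamma> \<tau> t \<omega>) \<partial>M)
      = (\<integral>\<^sup>+r. ennreal (f r) * Kr r (indicator B) \<partial>D)"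
    by (rule NN) simp_all
  have R: "(\<integral>\<^sup>+\<omega>. Hf f (zeta \<gamma> \<tau> t \<omega>) * indicator B (zeta \<gamma> \<tau> t \<omega>) \<partial>M)
      = (\<integral>\<^sup>+r. Kr r (\<lambda>x. Hf f x * indicator B x) \<partial>D)"
    using NN[of "\<lambda>_. 1" "\<lambda>x. Hf f x * indicator B x"] by simp
  have L1: "(\<integral>\<^sup>+r. ennreal (f r) * Kr r (indicator B) * indicator {..t} r \<partial>D)
      = indicator B 1 * (ennreal (cst f) * emeasure D {..t})"
  proof -
    have "(\<integral>\<^sup>+r. ennreal (f r) * Kr r (indicator B) * indicator {..t} r \<partial>D)
        = (\<integral>\<^sup>+r. indicator B (1::real) * (ennreal (f r) * indicator {..t} r) \<partial>D)"
      by (intro nn_integral_cong) (auto simp: Kr_def indicator_def)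
    also have "\<dots> = indicator B (1::real) * (\<integral>\<^sup>+r. ennreal (f r) * indicator {..t} r \<partial>D)"
      by (rule nn_integral_cmult) simp
    finally show ?thesis using le_part[OF f fn fi FTpos] by simp
  qed
  have R1: "(\<integral>\<^sup>+r. Kr r (\<lambda>x. Hf f x * indicator B x) * indicator {..t} r \<partial>D)
      = indicator B 1 * (ennreal (cst f) * emeasure D {..t})"
  proof -
    have "(\<integral>\<^sup>+r. Kr r (\<lambda>x. Hf f x * indicator B x) * indicator {..t} r \<partial>D)
        = (\<integral>\<^sup>+r. (ennreal (cst f) * indicator B (1::real)) * indicator {..t} r \<partial>D)"
      by (intro nn_integral_cong) (auto simp: Kr_def indicator_def Hf_def)
    also have "\<dots> = ennreal (cst f) * indicator B (1::real) * emeasure D {..t}"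
      by (subst nn_integral_cmult_indicator) auto
    finally show ?thesis by (simp add: ac_simps)
  qed
  show ?thesis
    unfolding L R
    apply (subst (1 2) split_t)
      apply simp
     apply simp
    unfolding L1 R1 gt_part[OF f fn B] ..
qed

end

context gsetup begin

interpretation DT: prob_space D by (rule prob_space_distr) simp

lemma zeta_meas[measurable]: "zeta \<gamma> \<tau> t \<in> borel_measurable M"
proof -
  have p: "(\<lambda>\<omega>. (\<tau> \<omega>, Y \<omega>)) \<in> measurable M (borel \<Otimes>\<^sub>M PS)" by measurable
  have "(\<lambda>\<omega>. ZZ (\<tau> \<omega>) (Y \<omega>)) \<in> borel_measurable M"
    using measurable_compose[OF p ZZ_measurable] by simp
  then show ?thesis by (rule measurable_cong[THEN iffD1, rotated]) (simp add: zeta_ZZ)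
qed

lemma phi_nonneg: "t < s \<Longrightarrow> 0 \<le> phi D t s x"
  unfolding phi_def set_lebesgue_integral_def
  using t_pos
  by (auto intro!: mult_nonneg_nonneg divide_nonneg_nonneg integral_nonneg Gamma_real_pos less_imp_le
           simp: indicator_def)

lemma cst_nonneg: "0 < FT \<Longrightarrow> (\<And>r. 0 \<le> f r) \<Longrightarrow> 0 \<le> cst f"
  unfolding cst_def set_lebesgue_integral_def by (auto intro!: integral_nonneg mult_nonneg_nonneg)

lemma f_tau_int:
  fixes f :: "real \<Rightarrow> real"
  assumes [measurable]: "f \<in> borel_measurable borel" and fi: "integrable D f"
  shows "integrable M (\<lambda>\<omega>. f (\<tau> \<omega>))"
  using integrable_distr_eq[of \<tau> M borel f] fi by simp

lemma Hf_nn_eq: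
  assumes f[measurable]: "f \<in> borel_measurable borel" and fn: "\<And>r. 0 \<le> f r" and fi: "integrable D f"
    and FTpos: "0 < FT"
  shows "(\<integral>\<^sup>+\<omega>. Hf f (zeta \<gamma> \<tau> t \<omega>) \<partial>M) = ennreal (\<integral>\<omega>. f (\<tau> \<omega>) \<partial>M)"
proof -
  have "(\<integral>\<^sup>+\<omega>. Hf f (zeta \<gamma> \<tau> t \<omega>) \<partial>M) = (\<integral>\<^sup>+\<omega>. ennreal (f (\<tau> \<omega>)) \<partial>M)"
    using identity[OF f fn fi FTpos, of UNIV] by simp
  also have "\<dots> = ennreal (\<integral>\<omega>. f (\<tau> \<omega>) \<partial>M)"
    by (rule nn_integral_eq_integral[OF f_tau_int[OF f fi]]) (simp add: fn)
  finally show ?thesis .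
qed

lemma Hf_fin_AE:
  assumes f[measurable]: "f \<in> borel_measurable borel" and fn: "\<And>r. 0 \<le> f r" and fi: "integrable D f"
    and FTpos: "0 < FT"
  shows "AE \<omega> in M. Hf f (zeta \<gamma> \<tau> t \<omega>) \<noteq> \<infinity>"
  by (rule nn_integral_PInf_AE) (simp_all add: Hf_nn_eq[OF f fn fi FTpos])

lemma Hf_int:
  assumes f[measurable]: "f \<in> borel_measurable borel" and fn: "\<And>r. 0 \<le> f r" and fi: "integrable D f"
    and FTpos: "0 < FT"
  shows "integrable M (\<lambda>\<omega>. enn2real (Hf f (zeta \<gamma> \<tau> t \<omega>)))"
proof (rule integrableI_nonneg)
  show "(\<lambda>\<omega>. enn2real (Hf f (zeta \<gamma> \<tau> t \<omega>))) \<in> borel_measurable M" by measurable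
  show "AE x in M. 0 \<le> enn2real (Hf f (zeta \<gamma> \<tau> t x))" by simp
  have "(\<integral>\<^sup>+\<omega>. ennreal (enn2real (Hf f (zeta \<gamma> \<tau> t \<omega>))) \<partial>M) = (\<integral>\<^sup>+\<omega>. Hf f (zeta \<gamma> \<tau> t \<omega>) \<partial>M)"
    by (intro nn_integral_cong_AE, rule AE_mp[OF Hf_fin_AE[OF f fn fi FTpos]])
       (auto intro!: AE_I2 simp: ennreal_enn2real less_top)
  then show "(\<integral>\<^sup>+\<omega>. ennreal (enn2real (Hf f (zeta \<gamma> \<tau> t \<omega>))) \<partial>M) < \<infinity>"
    by (simp add: Hf_nn_eq[OF f fn fi FTpos])
qed

lemma SI:
  assumes f[measurable]: "f \<in> borel_measurable borel" and fn: "\<And>r. 0 \<le> f r" and fi: "integrable D f"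
    and FTpos: "0 < FT" and B[measurable]: "B \<in> sets borel"
  shows "(\<integral>\<omega>. indicator B (zeta \<gamma> \<tau> t \<omega>) * f (\<tau> \<omega>) \<partial>M)
       = (\<integral>\<omega>. indicator B (zeta \<gamma> \<tau> t \<omega>) * enn2real (Hf f (zeta \<gamma> \<tau> t \<omega>)) \<partial>M)"
proof -
  have "(\<integral>\<omega>. indicator B (zeta \<gamma> \<tau> t \<omega>) * f (\<tau> \<omega>) \<partial>M)
      = enn2real (\<integral>\<^sup>+\<omega>. ennreal (indicator B (zeta \<gamma> \<tau> t \<omega>) * f (\<tau> \<omega>)) \<partial>M)"
    by (rule integral_eq_nn_integral) (auto simp: fn)
  also have "(\<integral>\<^sup>+\<omega>. ennreal (indicator B (zeta \<gamma> \<tau> t \<omega>) * f (\<tau> \<omega>)) \<partial>M)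
      = (\<integral>\<^sup>+\<omega>. ennreal (f (\<tau> \<omega>)) * indicator B (zeta \<gamma> \<tau> t \<omega>) \<partial>M)"
    by (intro nn_integral_cong) (simp add: indicator_def)
  also have "\<dots> = (\<integral>\<^sup>+\<omega>. Hf f (zeta \<gamma> \<tau> t \<omega>) * indicator B (zeta \<gamma> \<tau> t \<omega>) \<partial>M)"
    by (rule identity[OF f fn fi FTpos B])
  also have "\<dots> = (\<integral>\<^sup>+\<omega>. ennreal (indicator B (zeta \<gamma> \<tau> t \<omega>) * enn2real (Hf f (zeta \<gamma> \<tau> t \<omega>))) \<partial>M)"
    by (intro nn_integral_cong_AE, rule AE_mp[OF Hf_fin_AE[OF f fn fi FTpos]])
       (auto intro!: AE_I2 simp: ennreal_enn2real less_top indicator_def)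
  also have "enn2real \<dots> = (\<integral>\<omega>. indicator B (zeta \<gamma> \<tau> t \<omega>) * enn2real (Hf f (zeta \<gamma> \<tau> t \<omega>)) \<partial>M)"
    by (rule integral_eq_nn_integral[symmetric]) auto
  finally show ?thesis .
qed

lemma psi_real:
  assumes f[measurable]: "f \<in> borel_measurable borel" and fn: "\<And>r. 0 \<le> f r"
    and fin: "Psi f x \<noteq> \<infinity>"
  shows "integrable D (\<lambda>s. indicator {t<..} s * (f s * phi D t s x))"
    and "(\<integral>s. indicator {t<..} s * (f s * phi D t s x) \<partial>D) = enn2real (Psi f x)"
proof -
  have nn: "0 \<le> indicator {t<..} s * (f s * phi D t s x)" for s
    using fn phi_nonneg by (auto simp: indicator_def)
  have eq: "(\<integral>\<^sup>+s. ennreal (indicator {t<..} s * (f s * phi D t s x)) \<partial>D) = Psi f x"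
    unfolding Psi_def by (intro nn_integral_cong) (simp add: indicator_def)
  show "integrable D (\<lambda>s. indicator {t<..} s * (f s * phi D t s x))"
    using fin by (intro integrableI_nonneg) (auto simp: nn eq less_top)
  show "(\<integral>s. indicator {t<..} s * (f s * phi D t s x) \<partial>D) = enn2real (Psi f x)"
    by (subst integral_eq_nn_integral) (auto simp: nn eq)
qed

end

context gsetup begin

interpretation DT: prob_space D by (rule prob_space_distr) simp

lemma pw:
  fixes g :: "real \<Rightarrow> real"
  assumes g[measurable]: "g \<in> borel_measurable borel" and gi: "integrable D g" and FTpos: "0 < FT"
    and fin1: "Hf (\<lambda>r. max (g r) 0) x \<noteq> \<infinity>" and fin2: "Hf (\<lambda>r. max (- g r) 0) x \<noteq> \<infinity>"
  shows "enn2real (Hf (\<lambda>r. max (g r) 0) x) - enn2real (Hf (\<lambda>r. max (- g r) 0) x)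
       = 1/FT * (\<integral>r\<in>{0<..t}. g r \<partial>D) * indicator {1} x
         + (\<integral>r\<in>{t<..}. g r * phi D t r x \<partial>D) * indicator {0<..<1} x"
proof -
  define gp where "gp = (\<lambda>r. max (g r) 0)"
  define gm where "gm = (\<lambda>r. max (- g r) 0)"
  have gpm[measurable]: "gp \<in> borel_measurable borel" and gmm[measurable]: "gm \<in> borel_measurable borel"
    unfolding gp_def gm_def by measurable
  have gpn: "\<And>r. 0 \<le> gp r" and gmn: "\<And>r. 0 \<le> gm r" by (auto simp: gp_def gm_def)
  have gpi: "integrable D gp" and gmi: "integrable D gm" using gi by (auto simp: gp_def gm_def)
  have gs: "\<And>r. g r = gp r - gm r" by (auto simp: gp_def gm_def max_def)
  note fin1' = fin1[folded gp_def] and fin2' = fin2[folded gm_def]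
  show ?thesis
  proof (cases "x = 1")
    case True
    have "enn2real (Hf gp x) - enn2real (Hf gm x) = cst gp - cst gm"
      using True cst_nonneg[OF FTpos gpn] cst_nonneg[OF FTpos gmn] by (simp add: Hf_def)
    also have "\<dots> = 1/FT * ((\<integral>r. indicator {0<..t} r *\<^sub>R gp r \<partial>D) - (\<integral>r. indicator {0<..t} r *\<^sub>R gm r \<partial>D))"
      by (simp add: cst_def set_lebesgue_integral_def right_diff_distrib)
    also have "(\<integral>r. indicator {0<..t} r *\<^sub>R gp r \<partial>D) - (\<integral>r. indicator {0<..t} r *\<^sub>R gm r \<partial>D)
        = (\<integral>r. indicator {0<..t} r *\<^sub>R gp r - indicator {0<..t} r *\<^sub>R gm r \<partial>D)"
      by (rule Bochner_Integration.integral_diff[symmetric])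
         (use integrable_real_mult_indicator[of "{0<..t}" D gp, OF _ gpi]
              integrable_real_mult_indicator[of "{0<..t}" D gm, OF _ gmi] in \<open>simp_all add: mult.commute\<close>)
    also have "\<dots> = (\<integral>r\<in>{0<..t}. g r \<partial>D)"
      unfolding set_lebesgue_integral_def by (intro Bochner_Integration.integral_cong) (simp_all add: gs algebra_simps)
    finally show ?thesis using True by (simp add: gp_def gm_def)
  next
    case n1: False
    show ?thesis
    proof (cases "x \<in> {0<..<1}")
      case True
      have H: "Hf f x = Psi f x" for f using True n1 by (simp add: Hf_def)
      have f1: "Psi gp x \<noteq> \<infinity>" and f2: "Psi gm x \<noteq> \<infinity>" using fin1' fin2' by (simp_all add: H)
      have "enn2real (Hf gp x) - enn2real (Hf gm x)
          = (\<integral>s. indicator {t<..} s * (gp s * phi D t s x) \<partial>D) - (\<integral>s. indicator {t<..} s * (gm s * phi D t s x) \<partial>D)"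
        unfolding H psi_real(2)[OF gpm gpn f1] psi_real(2)[OF gmm gmn f2] ..
      also have "\<dots> = (\<integral>s. indicator {t<..} s * (gp s * phi D t s x) - indicator {t<..} s * (gm s * phi D t s x) \<partial>D)"
        by (rule Bochner_Integration.integral_diff[symmetric]) (rule psi_real(1)[OF gpm gpn f1], rule psi_real(1)[OF gmm gmn f2])
      also have "\<dots> = (\<integral>r\<in>{t<..}. g r * phi D t r x \<partial>D)"
        unfolding set_lebesgue_integral_def by (intro Bochner_Integration.integral_cong) (simp_all add: gs algebra_simps)
      finally show ?thesis using True n1 by (simp add: gp_def gm_def)
    next
      case False
      then show ?thesis using n1 by (simp add: Hf_def gp_def gm_def)
    qed
  qed
qed

lemma main_locale:
  fixes g :: "real \<Rightarrow> real"
  assumes F_pos: "0 < measure M {\<omega>\<in>space M. \<tau> \<omega> \<le> t}"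
    and g_meas[measurable]: "g \<in> borel_measurable borel"
    and g_int: "integrable M (\<lambda>\<omega>. g (\<tau> \<omega>))"
  shows "AE \<omega> in M.
     real_cond_exp M (vimage_algebra (space M) (zeta \<gamma> \<tau> t) borel) (\<lambda>\<omega>. g (\<tau> \<omega>)) \<omega> =
       (1 / measure M {\<omega>\<in>space M. \<tau> \<omega> \<le> t}) * (\<integral>r\<in>{0<..t}. g r \<partial>(distr M borel \<tau>))
         * indicator {1} (zeta \<gamma> \<tau> t \<omega>)
     + (\<integral>r\<in>{t<..}. g r * phi (distr M borel \<tau>) t r (zeta \<gamma> \<tau> t \<omega>) \<partial>(distr M borel \<tau>))
         * indicator {0<..<1} (zeta \<gamma> \<tau> t \<omega>)"
proof -
  have FTpos: "0 < FT" using F_pos by (simp add: FT_def)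
  define Fa where "Fa = vimage_algebra (space M) (zeta \<gamma> \<tau> t) borel"
  have zF[measurable]: "zeta \<gamma> \<tau> t \<in> measurable Fa borel"
    unfolding Fa_def by (rule measurable_vimage_algebra1) simp
  have setsF: "sets Fa = {zeta \<gamma> \<tau> t -` A \<inter> space M | A. A \<in> sets borel}"
    unfolding Fa_def by (rule sets_vimage_algebra2) simp
  have subalg: "subalgebra M Fa"
    unfolding subalgebra_def using setsF measurable_sets[OF zeta_meas] by (auto simp: Fa_def)
  interpret S: finite_measure_subalgebra M Fa by unfold_locales (rule subalg)
  define gp where "gp = (\<lambda>r. max (g r) 0)"
  define gm where "gm = (\<lambda>r. max (- g r) 0)"
  have gpm[measurable]: "gp \<in> borel_measurable borel" and gmm[measurable]: "gm \<in> borel_measurable borel"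
    unfolding gp_def gm_def by measurable
  have gpn: "\<And>r. 0 \<le> gp r" and gmn: "\<And>r. 0 \<le> gm r" by (auto simp: gp_def gm_def)
  have gi: "integrable D g" using integrable_distr_eq[of \<tau> M borel g] g_int by simp
  have gpi: "integrable D gp" and gmi: "integrable D gm" using gi by (auto simp: gp_def gm_def)
  have gs: "\<And>r. g r = gp r - gm r" by (auto simp: gp_def gm_def max_def)
  define C where "C \<omega> = enn2real (Hf gp (zeta \<gamma> \<tau> t \<omega>)) - enn2real (Hf gm (zeta \<gamma> \<tau> t \<omega>))" for \<omega>
  have intp: "integrable M (\<lambda>\<omega>. gp (\<tau> \<omega>))" and intm: "integrable M (\<lambda>\<omega>. gm (\<tau> \<omega>))"
    using f_tau_int gpi gmi by auto
  have AE1: "AE \<omega> in M. real_cond_exp M Fa (\<lambda>\<omega>. g (\<tau> \<omega>)) \<omega> = C \<omega>"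
  proof (rule S.real_cond_exp_charact)
    fix A assume A: "A \<in> sets Fa"
    then obtain B where B[measurable]: "B \<in> sets borel" and AB: "A = zeta \<gamma> \<tau> t -` B \<inter> space M"
      using setsF by auto
    have ind: "indicator A \<omega> = indicator B (zeta \<gamma> \<tau> t \<omega>)" if "\<omega> \<in> space M" for \<omega>
      using that by (simp add: AB indicator_def)
    have ib: "integrable M (\<lambda>\<omega>. indicator B (zeta \<gamma> \<tau> t \<omega>) * h \<omega>)" if "integrable M h" for h :: "'a \<Rightarrow> real"
    proof -
      have [measurable]: "h \<in> borel_measurable M" using that by (rule borel_measurable_integrable)
      show ?thesis
        by (rule Bochner_Integration.integrable_bound[OF that]) (auto simp: indicator_def intro!: AE_I2)
    qed
    have "(\<integral>\<omega>\<in>A. g (\<tau> \<omega>) \<partial>M)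
        = (\<integral>\<omega>. indicator B (zeta \<gamma> \<tau> t \<omega>) * gp (\<tau> \<omega>) - indicator B (zeta \<gamma> \<tau> t \<omega>) * gm (\<tau> \<omega>) \<partial>M)"
      unfolding set_lebesgue_integral_def by (intro Bochner_Integration.integral_cong) (simp_all add: ind gs right_diff_distrib)
    also have "\<dots> = (\<integral>\<omega>. indicator B (zeta \<gamma> \<tau> t \<omega>) * gp (\<tau> \<omega>) \<partial>M) - (\<integral>\<omega>. indicator B (zeta \<gamma> \<tau> t \<omega>) * gm (\<tau> \<omega>) \<partial>M)"
      by (rule Bochner_Integration.integral_diff) (intro ib intp intm)+
    also have "\<dots> = (\<integral>\<omega>. indicator B (zeta \<gamma> \<tau> t \<omega>) * enn2real (Hf gp (zeta \<gamma> \<tau> t \<omega>)) \<partial>M)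
                 - (\<integral>\<omega>. indicator B (zeta \<gamma> \<tau> t \<omega>) * enn2real (Hf gm (zeta \<gamma> \<tau> t \<omega>)) \<partial>M)"
      by (simp add: SI[OF _ gpn gpi FTpos B] SI[OF _ gmn gmi FTpos B])
    also have "\<dots> = (\<integral>\<omega>. indicator B (zeta \<gamma> \<tau> t \<omega>) * enn2real (Hf gp (zeta \<gamma> \<tau> t \<omega>))
                 - indicator B (zeta \<gamma> \<tau> t \<omega>) * enn2real (Hf gm (zeta \<gamma> \<tau> t \<omega>)) \<partial>M)"
      by (rule Bochner_Integration.integral_diff[symmetric]) (intro ib Hf_int gpn gmn gpi gmi FTpos; simp)+
    also have "\<dots> = (\<integral>\<omega>\<in>A. C \<omega> \<partial>M)"
      unfolding set_lebesgue_integral_def by (intro Bochner_Integration.integral_cong) (simp_all add: ind C_def right_diff_distrib)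
    finally show "(\<integral>\<omega>\<in>A. g (\<tau> \<omega>) \<partial>M) = (\<integral>\<omega>\<in>A. C \<omega> \<partial>M)" .
  next
    show "integrable M (\<lambda>\<omega>. g (\<tau> \<omega>))" by (rule g_int)
  next
    show "integrable M C" unfolding C_def
      by (intro Bochner_Integration.integrable_diff Hf_int gpn gmn gpi gmi FTpos) simp_all
  next
    show "C \<in> borel_measurable Fa" unfolding C_def by measurable
  qed
  have AE2: "AE \<omega> in M. C \<omega> = 1/FT * (\<integral>r\<in>{0<..t}. g r \<partial>D) * indicator {1} (zeta \<gamma> \<tau> t \<omega>)
         + (\<integral>r\<in>{t<..}. g r * phi D t r (zeta \<gamma> \<tau> t \<omega>) \<partial>D) * indicator {0<..<1} (zeta \<gamma> \<tau> t \<omega>)"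
    using AE_conjI[OF Hf_fin_AE[OF gpm gpn gpi FTpos] Hf_fin_AE[OF gmm gmn gmi FTpos]]
  proof (rule AE_mp, intro AE_I2 impI)
    fix \<omega> assume a: "Hf gp (zeta \<gamma> \<tau> t \<omega>) \<noteq> \<infinity> \<and> Hf gm (zeta \<gamma> \<tau> t \<omega>) \<noteq> \<infinity>"
    show "C \<omega> = 1/FT * (\<integral>r\<in>{0<..t}. g r \<partial>D) * indicator {1} (zeta \<gamma> \<tau> t \<omega>)
         + (\<integral>r\<in>{t<..}. g r * phi D t r (zeta \<gamma> \<tau> t \<omega>) \<partial>D) * indicator {0<..<1} (zeta \<gamma> \<tau> t \<omega>)"
      unfolding C_def gp_def gm_def
      by (rule pw[OF g_meas gi FTpos]) (use a in \<open>simp_all add: gp_def gm_def\<close>)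
  qed
  from AE_conjI[OF AE1 AE2] show ?thesis unfolding Fa_def FT_def
    by (rule AE_mp) (auto intro!: AE_I2)
qed

end

theorem mainTheorem5:
  fixes M :: "'a measure" and \<gamma> :: "real \<Rightarrow> 'a \<Rightarrow> real" and \<tau> :: "'a \<Rightarrow> real"
    and g :: "real \<Rightarrow> real" and t :: real
  assumes complete: "complete_measure M"
    and gp: "gamma_process M \<gamma>"
    and tau_meas: "\<tau> \<in> borel_measurable M"
    and tau_pos: "\<forall>\<omega>\<in>space M. 0 < \<tau> \<omega>"
    and indep: "prob_space.indep_set M
                  (sigma_sets (space M) {\<tau> -` A \<inter> space M | A. A \<in> sets borel})
                  (sigma_sets (space M) (\<Union>s\<in>{0..}. {\<gamma> s -` A \<inter> space M | A. A \<in> sets borel}))"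
    and t_pos: "0 < t"
    and F_pos: "0 < measure M {\<omega>\<in>space M. \<tau> \<omega> \<le> t}"
    and g_meas: "g \<in> borel_measurable borel"
    and g_int: "integrable M (\<lambda>\<omega>. g (\<tau> \<omega>))"
  shows "AE \<omega> in M.
     real_cond_exp M (vimage_algebra (space M) (zeta \<gamma> \<tau> t) borel) (\<lambda>\<omega>. g (\<tau> \<omega>)) \<omega> =
       (1 / measure M {\<omega>\<in>space M. \<tau> \<omega> \<le> t}) * (\<integral>r\<in>{0<..t}. g r \<partial>(distr M borel \<tau>))
         * indicator {1} (zeta \<gamma> \<tau> t \<omega>)
     + (\<integral>r\<in>{t<..}. g r * phi (distr M borel \<tau>) t r (zeta \<gamma> \<tau> t \<omega>) \<partial>(distr M borel \<tau>))
         * indicator {0<..<1} (zeta \<gamma> \<tau> t \<omega>)"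
proof -
  have P: "prob_space M" using gp unfolding gamma_process_def by simp
  interpret gsetup M \<gamma> \<tau> t
    using P tau_meas tau_pos indep t_pos gp by (simp add: gsetup_def gsetup_axioms_def)
  show ?thesis by (rule main_locale[OF F_pos g_meas g_int])
qed

end
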